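(* Let $k\geq 3$ be an odd integer and let $D$ be a directed graph whose degeneracy is $k$. Then $f(D)<\frac{k-1}{k+1}\,n(D)$.
   Context: Directed graphs are oriented graphs: finite, no loops, no multiple arcs and no pair of antiparallel arcs. $n(D)$ is the number of vertices and $f(D)$ is the minimum size of a set $F\subseteq V(D)$ such that $D-F$ contains no directed cycle. The degeneracy of $D$ is the degeneracy of its underlying undirected graph, i.e. the least $k$ such that there is an ordering of the vertices in which every vertex has at most $k$ neighbours preceding it. *)

theory Defs
  imports Complex_Main
begin

definition oriented_graph :: "'a set \<Rightarrow> ('a \<times> 'a) set \<Rightarrow> bool" where
  "oriented_graph V A \<longleftrightarrow> finite V \<and> A \<subseteq> V \<times> V \<and> irrefl A \<and>
     (\<forall>u v. (u, v) \<in> A \<longrightarrow> (v, u) \<notin> A)"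

definition und_adj :: "('a \<times> 'a) set \<Rightarrow> 'a \<Rightarrow> 'a \<Rightarrow> bool" where
  "und_adj A u v \<longleftrightarrow> (u, v) \<in> A \<or> (v, u) \<in> A"

definition degenerate_ordering :: "'a set \<Rightarrow> ('a \<times> 'a) set \<Rightarrow> nat \<Rightarrow> 'a list \<Rightarrow> bool" where
  "degenerate_ordering V A k xs \<longleftrightarrow> distinct xs \<and> set xs = V \<and>
     (\<forall>i < length xs. card {j. j < i \<and> und_adj A (xs ! i) (xs ! j)} \<le> k)"

definition degeneracy :: "'a set \<Rightarrow> ('a \<times> 'a) set \<Rightarrow> nat" where
  "degeneracy V A = (LEAST k. \<exists>xs. degenerate_ordering V A k xs)"

definition no_dicycle_after_removal :: "'a set \<Rightarrow> ('a \<times> 'a) set \<Rightarrow> 'a set \<Rightarrow> bool" where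
  "no_dicycle_after_removal V A F \<longleftrightarrow> acyclic (A \<inter> ((V - F) \<times> (V - F)))"

definition fvs_number :: "'a set \<Rightarrow> ('a \<times> 'a) set \<Rightarrow> nat" where
  "fvs_number V A = (LEAST m. \<exists>F. F \<subseteq> V \<and> card F = m \<and> no_dicycle_after_removal V A F)"

end

theory Submission
  imports Defs
begin

lemma acyc_sink:
  assumes ac: "acyclic R" and nw: "\<And>z. (w,z) \<notin> R'" and sub: "R' \<subseteq> R \<union> {(u,w)|u. True}"
  shows "acyclic R'"
proof -
  have key: "(x,y) \<in> R'\<^sup>+ \<Longrightarrow> y = w \<or> (x,y) \<in> R\<^sup>+" for x y
  proof (induction rule: trancl_induct)
    case (base y) then show ?case using sub by auto
  next
    case (step y z)
    show ?case
    proof (cases "y = w")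
      case True then show ?thesis using step nw by auto
    next
      case False
      then have "(x,y) \<in> R\<^sup>+" using step by auto
      moreover have "(y,z) \<in> R \<or> z = w" using step sub by auto
      ultimately show ?thesis by (meson trancl_into_trancl)
    qed
  qed
  show ?thesis unfolding acyclic_def
  proof
    fix x
    show "(x,x) \<notin> R'\<^sup>+"
    proof
      assume h: "(x,x) \<in> R'\<^sup>+"
      show False
      proof (cases "x = w")
        case True
        then obtain z where "(w,z) \<in> R'" using h by (auto dest: tranclD)
        then show False using nw by auto
      next
        case False
        then have "(x,x) \<in> R\<^sup>+" using key[OF h] by auto
        then show False using ac unfolding acyclic_def by auto
      qed
    qed
  qed
qed

lemma acyc_source:
  assumes ac: "acyclic R" and nw: "\<And>z. (z,w) \<notin> R'" and sub: "R' \<subseteq> R \<union> {(w,u)|u. True}"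
  shows "acyclic R'"
proof -
  have "acyclic (R'\<inverse>)"
    by (rule acyc_sink[where R="R\<inverse>" and w=w]) (use ac nw sub in \<open>auto simp: acyclic_converse\<close>)
  then show ?thesis by (simp add: acyclic_converse)
qed

lemma acyc_two:
  assumes irr: "irrefl A" and anti: "\<forall>u v. (u, v) \<in> A \<longrightarrow> (v, u) \<notin> A" and ab: "a \<noteq> b"
  shows "acyclic (A \<inter> ({a,b} \<times> {a,b}))"
proof (cases "(a,b) \<in> A")
  case True
  then have "A \<inter> ({a,b} \<times> {a,b}) \<subseteq> {(a,b)}" using irr anti unfolding irrefl_def by auto
  moreover have "acyclic {(a,b)}" using ab by (simp add: acyclic_def trancl_insert)
  ultimately show ?thesis using acyclic_subset by blast
next
  case False
  then have "A \<inter> ({a,b} \<times> {a,b}) \<subseteq> {(b,a)}" using irr unfolding irrefl_def by auto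
  moreover have "acyclic {(b,a)}" using ab by (simp add: acyclic_def trancl_insert)
  ultimately show ?thesis using acyclic_subset by blast
qed

lemma main:
  assumes fin: "finite V" and irr: "irrefl A" and anti: "\<forall>u v. (u, v) \<in> A \<longrightarrow> (v, u) \<notin> A"
   and deg: "\<And>W. W \<subseteq> V \<Longrightarrow> W \<noteq> {} \<Longrightarrow> \<exists>w\<in>W. card {u\<in>W. und_adj A w u} \<le> k"
   and oddk: "odd k" and k1: "k \<ge> 3"
  shows "W \<subseteq> V \<Longrightarrow> W \<noteq> {} \<Longrightarrow> \<exists>S\<subseteq>W. acyclic (A \<inter> (S \<times> S)) \<and> 2 * card W < (k+1) * card S"
proof (induction "card W" arbitrary: W rule: less_induct)
  case less
  have finW: "finite W" using less.prems fin finite_subset by blast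
  obtain w where wW: "w \<in> W" and dw: "card {u\<in>W. und_adj A w u} \<le> k"
    using deg less.prems by blast
  define Out where "Out = {u\<in>W. (w,u)\<in>A}"
  define In where "In = {u\<in>W. (u,w)\<in>A}"
  have "Out \<union> In = {u\<in>W. und_adj A w u}" unfolding Out_def In_def und_adj_def by auto
  moreover have "Out \<inter> In = {}" unfolding Out_def In_def using anti by auto
  moreover have "finite Out" "finite In" using finW unfolding Out_def In_def by auto
  ultimately have "card Out + card In \<le> k" using dw card_Un_disjoint by metis
  then have small: "2 * card Out + 1 \<le> k \<or> 2 * card In + 1 \<le> k" using oddk
    by presburger
  obtain N where NW: "N \<subseteq> W" and wN: "w \<notin> N" and cN: "2 * card N + 1 \<le> k"
    and ext: "\<And>S'. S' \<subseteq> W - insert w N \<Longrightarrow> acyclic (A \<inter> (S' \<times> S')) \<Longrightarrow>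
                    acyclic (A \<inter> (insert w S' \<times> insert w S'))"
  proof (cases "2 * card Out + 1 \<le> k")
    case True
    show ?thesis
    proof (rule that[of Out])
      show "Out \<subseteq> W" "w \<notin> Out" using irr unfolding Out_def irrefl_def by auto
      show "2 * card Out + 1 \<le> k" by fact
      fix S' assume S': "S' \<subseteq> W - insert w Out" and a: "acyclic (A \<inter> (S' \<times> S'))"
      show "acyclic (A \<inter> (insert w S' \<times> insert w S'))"
        by (rule acyc_sink[OF a, where w=w]) (use S' irr in \<open>auto simp: Out_def irrefl_def\<close>)
    qed
  next
    case False
    then have c: "2 * card In + 1 \<le> k" using small by auto
    show ?thesis
    proof (rule that[of In])
      show "In \<subseteq> W" "w \<notin> In" using irr unfolding In_def irrefl_def by auto
      show "2 * card In + 1 \<le> k" by fact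
      fix S' assume S': "S' \<subseteq> W - insert w In" and a: "acyclic (A \<inter> (S' \<times> S'))"
      show "acyclic (A \<inter> (insert w S' \<times> insert w S'))"
        by (rule acyc_source[OF a, where w=w]) (use S' irr in \<open>auto simp: In_def irrefl_def\<close>)
    qed
  qed
  define W' where "W' = W - insert w N"
  have cW: "card W = card W' + 1 + card N"
  proof -
    have "W = W' \<union> insert w N" "W' \<inter> insert w N = {}" using NW wW unfolding W'_def by auto
    moreover have "finite W'" "finite (insert w N)" using finW NW unfolding W'_def
      by (auto intro: finite_subset)
    ultimately have "card W = card W' + card (insert w N)" using card_Un_disjoint by metis
    moreover have "card (insert w N) = card N + 1" using wN NW finW finite_subset by fastforce
    ultimately show ?thesis by simp
  qed
  show ?case
  proof (cases "W' = {}")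
    case False
    have "card W' < card W" using cW by simp
    moreover have "W' \<subseteq> V" using less.prems unfolding W'_def by auto
    ultimately obtain S' where S'W: "S' \<subseteq> W'" and aS: "acyclic (A \<inter> (S' \<times> S'))"
      and cS: "2 * card W' < (k+1) * card S'" using less.hyps False by blast
    have fS: "finite S'" using S'W finW unfolding W'_def by (auto intro: finite_subset)
    have wS: "w \<notin> S'" using S'W unfolding W'_def by auto
    have "acyclic (A \<inter> (insert w S' \<times> insert w S'))" using ext S'W aS unfolding W'_def by blast
    moreover have "insert w S' \<subseteq> W" using S'W wW unfolding W'_def by auto
    moreover have "2 * card W < (k+1) * card (insert w S')"
    proof -
      have "card (insert w S') = card S' + 1" using fS wS by simp
      then show ?thesis using cW cS cN by (simp add: algebra_simps)
    qed
    ultimately show ?thesis by blast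
  next
    case True
    then have cW1: "card W = 1 + card N" using cW by simp
    show ?thesis
    proof (cases "card W = 1")
      case True
      have "A \<inter> ({w} \<times> {w}) = {}" using irr unfolding irrefl_def by auto
      then have "acyclic (A \<inter> ({w} \<times> {w}))" by (simp add: acyclic_def)
      moreover have "2 * card W < (k+1) * card {w}" using True k1 by simp
      ultimately show ?thesis using wW by blast
    next
      case False
      then have "card W \<ge> 2" using wW finW card_0_eq by fastforce
      then obtain b where bW: "b \<in> W" and bw: "b \<noteq> w"
      proof -
        have "card (W - {w}) \<ge> 1" using \<open>card W \<ge> 2\<close> wW finW by simp
        then have "W - {w} \<noteq> {}" by (metis card.empty not_one_le_zero)
        then show ?thesis using that by blast
      qed
      have "acyclic (A \<inter> ({w,b} \<times> {w,b}))" using acyc_two[OF irr anti] bw by auto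
      moreover have "card {w,b} = 2" using bw by simp
      moreover have "2 * card W < (k+1) * 2" using cW1 cN by simp
      ultimately show ?thesis using wW bW by (metis empty_subsetI insert_subset)
    qed
  qed
qed

lemma ordering_exists:
  assumes "finite V"
  shows "\<exists>k xs. degenerate_ordering V A k xs"
proof -
  obtain xs where xs: "distinct xs" "set xs = V" using finite_distinct_list[OF assms] by blast
  have "\<forall>i < length xs. card {j. j < i \<and> und_adj A (xs ! i) (xs ! j)} \<le> length xs"
  proof (intro allI impI)
    fix i assume "i < length xs"
    have "card {j. j < i \<and> und_adj A (xs ! i) (xs ! j)} \<le> card {..<i}"
      by (rule card_mono) auto
    then show "card {j. j < i \<and> und_adj A (xs ! i) (xs ! j)} \<le> length xs"
      using \<open>i < length xs\<close> by simp
  qed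
  then show ?thesis using xs unfolding degenerate_ordering_def by blast
qed

lemma hered:
  assumes ord: "degenerate_ordering V A k xs" and irr: "irrefl A"
    and WV: "W \<subseteq> V" and Wne: "W \<noteq> {}"
  shows "\<exists>w\<in>W. card {u\<in>W. und_adj A w u} \<le> k"
proof -
  have d: "distinct xs" and sx: "set xs = V"
    and bnd: "\<forall>i < length xs. card {j. j < i \<and> und_adj A (xs ! i) (xs ! j)} \<le> k"
    using ord unfolding degenerate_ordering_def by auto
  define I where "I = {i. i < length xs \<and> xs ! i \<in> W}"
  have fI: "finite I" unfolding I_def by auto
  have Ine: "I \<noteq> {}" using Wne WV sx unfolding I_def by (metis (mono_tags, lifting) empty_Collect_eq in_set_conv_nth subset_iff ex_in_conv)
  define i where "i = Max I"
  have iI: "i \<in> I" unfolding i_def using fI Ine by simp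
  have imax: "\<And>j. j \<in> I \<Longrightarrow> j \<le> i" unfolding i_def using fI by simp
  have "{u\<in>W. und_adj A (xs!i) u} \<subseteq> (\<lambda>j. xs ! j) ` {j. j < i \<and> und_adj A (xs ! i) (xs ! j)}"
  proof
    fix u assume u: "u \<in> {u\<in>W. und_adj A (xs!i) u}"
    then obtain j where j: "j < length xs" "u = xs ! j" using WV sx by (metis (no_types, lifting) in_set_conv_nth mem_Collect_eq subsetD)
    then have "j \<in> I" using u unfolding I_def by auto
    then have "j \<le> i" using imax by auto
    moreover have "j \<noteq> i" using u j irr unfolding und_adj_def irrefl_def by auto
    ultimately show "u \<in> (\<lambda>j. xs ! j) ` {j. j < i \<and> und_adj A (xs ! i) (xs ! j)}"
      using u j by auto
  qed
  then have "card {u\<in>W. und_adj A (xs!i) u} \<le> card ((\<lambda>j. xs ! j) ` {j. j < i \<and> und_adj A (xs ! i) (xs ! j)})"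
    by (rule card_mono[rotated]) auto
  also have "\<dots> \<le> card {j. j < i \<and> und_adj A (xs ! i) (xs ! j)}" by (rule card_image_le) auto
  also have "\<dots> \<le> k" using bnd iI unfolding I_def by auto
  finally show ?thesis using iI unfolding I_def by auto
qed

theorem mainTheorem6:
  fixes V :: "'a set" and A :: "('a \<times> 'a) set" and k :: nat
  assumes "oriented_graph V A"
    and "odd k" and "k \<ge> 3"
    and "degeneracy V A = k"
  shows "real (fvs_number V A) < (real k - 1) / (real k + 1) * real (card V)"
proof -
  have fin: "finite V" and irr: "irrefl A" and anti: "\<forall>u v. (u, v) \<in> A \<longrightarrow> (v, u) \<notin> A"
    using assms(1) unfolding oriented_graph_def by auto
  obtain xs where ord: "degenerate_ordering V A k xs"
    using LeastI_ex[OF ordering_exists[OF fin, of A]] assms(4) unfolding degeneracy_def by auto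
  have Vne: "V \<noteq> {}"
  proof
    assume "V = {}"
    then have "degenerate_ordering V A 0 []" unfolding degenerate_ordering_def by simp
    then have "degeneracy V A \<le> 0" unfolding degeneracy_def by (metis Least_le)
    then show False using assms by simp
  qed
  obtain S where SV: "S \<subseteq> V" and aS: "acyclic (A \<inter> (S \<times> S))"
    and cS: "2 * card V < (k+1) * card S"
    using main[OF fin irr anti hered[OF ord irr] assms(2) assms(3) order_refl Vne] by blast
  have nd: "no_dicycle_after_removal V A (V - S)"
    unfolding no_dicycle_after_removal_def using aS SV by (simp add: Diff_Diff_Int Int_absorb1)
  have "fvs_number V A \<le> card (V - S)"
    unfolding fvs_number_def by (rule Least_le) (use nd in blast)
  moreover have "card (V - S) = card V - card S" using SV fin by (simp add: card_Diff_subset finite_subset)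
  moreover have "card S \<le> card V" using SV fin by (simp add: card_mono)
  ultimately have f: "real (fvs_number V A) \<le> real (card V) - real (card S)" by simp
  have "2 * real (card V) < (real k + 1) * real (card S)"
    using cS by (metis of_nat_add of_nat_less_iff of_nat_mult of_nat_numeral of_nat_1)
  then have "real (card V) - real (card S) < (real k - 1) / (real k + 1) * real (card V)"
    by (simp add: field_simps)
  then show ?thesis using f by linarith
qed

end
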